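(* Let $p>0$ and let $u:\mathbb{R}^4\to\mathbb{R}$ be a solution to $\Delta^2 u=(1-|x|^p)e^{4u}$ in $\mathbb{R}^4$ with $(1-|x|^p)e^{4u}\in L^1(\mathbb{R}^4)$, $\Lambda:=\int_{\mathbb{R}^4}(1-|x|^p)e^{4u}dx$, and $$v(x):=\frac{1}{8\pi^2}\int_{\mathbb{R}^4}\log\left(\frac{|y|}{|x-y|}\right)(1-|y|^p)e^{4u(y)}\,dy.$$ Then there exists a constant $C$ such that for all $|x|\ge 4$, $$v(x)\le -\frac{\Lambda}{8\pi^2}\log|x|+C.$$ *)

theory Defs
  imports "HOL-Analysis.Analysis"
begin

definition pdiff :: "real^4 \<Rightarrow> (real^4 \<Rightarrow> real) \<Rightarrow> real^4 \<Rightarrow> real" where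
  "pdiff b f x = deriv (\<lambda>t. f (x + t *\<^sub>R b)) 0"

definition laplacian :: "(real^4 \<Rightarrow> real) \<Rightarrow> real^4 \<Rightarrow> real" where
  "laplacian f x = (\<Sum>b\<in>Basis. pdiff b (pdiff b f) x)"

definition bilaplacian :: "(real^4 \<Rightarrow> real) \<Rightarrow> real^4 \<Rightarrow> real" where
  "bilaplacian f = laplacian (laplacian f)"

fun Ck :: "nat \<Rightarrow> (real^4 \<Rightarrow> real) \<Rightarrow> bool" where
  "Ck 0 f = continuous_on UNIV f"
| "Ck (Suc k) f = (f differentiable_on UNIV \<and> (\<forall>b\<in>Basis. Ck k (pdiff b f)))"

end

theory Submission
  imports Defs
begin

definition phi0 :: "real \<Rightarrow> real" where
  "phi0 t = indicator {-1..1} t * (1 - ln \<bar>t\<bar>)"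

lemma neg_ln_le_powr:
  fixes s :: real assumes "0 < s" shows "- ln s \<le> 2 * s powr (-1/2)"
proof -
  have "ln (s powr (-1/2)) \<le> s powr (-1/2) - 1"
    by (rule ln_le_minus_one) (use assms in simp)
  moreover have "ln (s powr (-1/2)) = (-1/2) * ln s" using assms by (simp add: ln_powr)
  ultimately show ?thesis by simp
qed

lemma integrable_powr_01: "integrable lborel (\<lambda>t::real. indicator {0..1} t * t powr (-1/2))"
proof -
  have "(\<lambda>t::real. t powr (-1/2)) integrable_on {0..1}"
    by (rule integrable_on_powr_from_0) auto
  hence "(\<lambda>t::real. t powr (-1/2)) absolutely_integrable_on {0..1}"
    by (subst absolutely_integrable_on_iff_nonneg) auto
  thus ?thesis unfolding set_integrable_def
    by (subst (asm) integrable_completion) (auto simp: mult_ac)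
qed

lemma integrable_phi0: "integrable lborel phi0"
proof -
  have i1: "integrable lborel (\<lambda>t::real. indicator {0..1} t * t powr (-1/2))"
    by (rule integrable_powr_01)
  have i2: "integrable lborel (\<lambda>t::real. indicator {0..1} (0 + (-1) * t) * (0 + (-1) * t) powr (-1/2))"
    using lborel_integrable_real_affine[OF i1, of "-1" 0] by simp
  have i3: "integrable lborel (indicator {-1..1::real} :: real \<Rightarrow> real)"
    by (rule integrable_real_indicator) auto
  have "integrable lborel (\<lambda>t::real. indicator {-1..1::real} t + 2 * (indicator {0..1} t * t powr (-1/2)
         + indicator {0..1} (0 + (-1) * t) * (0 + (-1) * t) powr (-1/2)))"
    using i1 i2 i3 by (intro Bochner_Integration.integrable_add Bochner_Integration.integrable_mult_right) auto
  then show ?thesis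
  proof (rule Bochner_Integration.integrable_bound[OF _ _ AE_I2])
    show "phi0 \<in> borel_measurable lborel" unfolding phi0_def by measurable
  next
    fix t :: real
    show "norm (phi0 t) \<le> norm (indicator {-1..1::real} t + 2 * (indicator {0..1} t * t powr (-1/2)
         + indicator {0..1} (0 + (-1) * t) * (0 + (-1) * t) powr (-1/2)))"
    proof (cases "t \<in> {-1..1}")
      case False thus ?thesis by (simp add: phi0_def)
    next
      case True
      have A: "0 \<le> 1 - ln \<bar>t\<bar>"
      proof (cases "t = 0")
        case False hence "ln \<bar>t\<bar> \<le> 0" using True by (subst ln_le_zero_iff) auto thus ?thesis by simp
      qed simp
      have B: "1 - ln \<bar>t\<bar> \<le> 1 + 2 * \<bar>t\<bar> powr (-1/2)"
      proof (cases "t = 0")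
        case False thus ?thesis using neg_ln_le_powr[of "\<bar>t\<bar>"] by simp
      qed simp
      have C: "\<bar>t\<bar> powr (-1/2) = indicator {0..1} t * t powr (-1/2)
         + indicator {0..1} (0 + (-1) * t) * (0 + (-1) * t) powr (-1/2)"
        using True by (cases "t \<ge> 0") (auto simp: indicator_def)
      show ?thesis using True A B C by (simp add: phi0_def)
    qed
  qed
qed

lemma prod_integrable:
  fixes \<phi> :: "'a::euclidean_space \<Rightarrow> real \<Rightarrow> real"
  assumes I: "\<And>b. b \<in> Basis \<Longrightarrow> integrable lborel (\<phi> b)"
  shows "integrable lborel (\<lambda>y::'a. \<Prod>b\<in>Basis. \<phi> b (y \<bullet> b))"
proof -
  interpret product_sigma_finite "\<lambda>_. lborel" by standard
  have M: "\<phi> b \<in> borel_measurable borel" if "b \<in> Basis" for b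
    using borel_measurable_integrable[OF I[OF that]] by simp
  have "integrable (\<Pi>\<^sub>M b\<in>Basis. lborel) (\<lambda>f. \<Prod>b\<in>Basis. \<phi> b (f b))"
    by (rule product_integrable_prod) (auto simp: I)
  moreover have "(\<Sum>c\<in>Basis. f c *\<^sub>R c) \<bullet> b = f b" if "b \<in> Basis" for f :: "'a \<Rightarrow> real" and b
    using that by (simp add: inner_sum_left inner_Basis if_distrib sum.delta cong: if_cong)
  ultimately have "integrable (\<Pi>\<^sub>M b\<in>Basis. lborel) (\<lambda>f. (\<lambda>y::'a. \<Prod>b\<in>Basis. \<phi> b (y \<bullet> b)) (\<Sum>c\<in>Basis. f c *\<^sub>R c))"
    by (simp cong: prod.cong)
  moreover have "(\<lambda>y::'a. \<Prod>b\<in>Basis. \<phi> b (y \<bullet> b)) \<in> borel_measurable borel"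
    using M by (intro borel_measurable_prod) (auto intro: measurable_compose[OF _ M])
  ultimately show ?thesis
    by (subst lborel_eq) (subst integrable_distr_eq; auto)
qed

lemma phi0_nonneg: "0 \<le> phi0 t"
proof (cases "t \<in> {-1..1}")
  case True
  show ?thesis
  proof (cases "t = 0")
    case False hence "ln \<bar>t\<bar> \<le> 0" using True by (subst ln_le_zero_iff) auto
    thus ?thesis using True by (simp add: phi0_def)
  qed (simp add: phi0_def)
qed (simp add: phi0_def)

lemma phi0_ge1: "\<bar>t\<bar> \<le> 1 \<Longrightarrow> 1 - ln \<bar>t\<bar> \<le> phi0 t" "\<bar>t\<bar> \<le> 1 \<Longrightarrow> 1 \<le> phi0 t"
proof -
  assume t: "\<bar>t\<bar> \<le> 1"
  have "ln \<bar>t\<bar> \<le> 0"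
  proof (cases "t = 0")
    case False thus ?thesis using t by (subst ln_le_zero_iff) auto
  qed simp
  moreover have "t \<in> {-1..1}" using t by auto
  ultimately show "1 - ln \<bar>t\<bar> \<le> phi0 t" "1 \<le> phi0 t" by (auto simp: phi0_def)
qed

lemma integrable_H:
  "integrable lborel (\<lambda>y::'a::euclidean_space. \<Prod>b\<in>Basis. phi0 ((y - a) \<bullet> b))"
proof -
  have T: "integrable lborel (\<lambda>t. phi0 (t - c))" for c
  proof -
    have "integrable lborel (\<lambda>t. phi0 ((-c) + 1 * t))"
      using lborel_integrable_real_affine[OF integrable_phi0, of 1 "-c"] by simp
    thus ?thesis by (simp add: algebra_simps)
  qed
  have "integrable lborel (\<lambda>y::'a. \<Prod>b\<in>Basis. (\<lambda>t. phi0 (t - a \<bullet> b)) (y \<bullet> b))"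
    by (rule prod_integrable) (rule T)
  thus ?thesis by (simp add: inner_diff_left)
qed

lemma H_nonneg: "0 \<le> (\<Prod>b\<in>Basis. phi0 (z \<bullet> b))"
  by (intro prod_nonneg) (auto simp: phi0_nonneg)

lemma neg_ln_le_H:
  fixes z :: "'a::euclidean_space"
  assumes "norm z \<le> 1"
  shows "- ln (norm z) \<le> (\<Prod>b\<in>Basis. phi0 (z \<bullet> b))"
proof (cases "z = 0")
  case True thus ?thesis using H_nonneg[of z] by simp
next
  case False
  then obtain b where b: "b \<in> Basis" "z \<bullet> b \<noteq> 0" using euclidean_all_zero_iff by blast
  have le1: "\<bar>z \<bullet> c\<bar> \<le> 1" if "c \<in> Basis" for c
    using Basis_le_norm[OF that, of z] assms by simp
  have "- ln (norm z) \<le> - ln \<bar>z \<bullet> b\<bar>"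
    using b Basis_le_norm[OF b(1), of z] by (simp add: ln_mono)
  also have "\<dots> \<le> phi0 (z \<bullet> b)" using phi0_ge1(1)[OF le1[OF b(1)]] by simp
  finally have A: "- ln (norm z) \<le> phi0 (z \<bullet> b)" .
  have P: "1 \<le> (\<Prod>c\<in>Basis - {b}. phi0 (z \<bullet> c))"
    by (rule prod_ge_1) (use le1 phi0_ge1(2) in auto)
  have "phi0 (z \<bullet> b) \<le> phi0 (z \<bullet> b) * (\<Prod>c\<in>Basis - {b}. phi0 (z \<bullet> c))"
    using P phi0_nonneg[of "z \<bullet> b"] by (metis mult.right_neutral mult_left_mono)
  with A have "- ln (norm z) \<le> phi0 (z \<bullet> b) * (\<Prod>c\<in>Basis - {b}. phi0 (z \<bullet> c))" by linarith
  thus ?thesis using b(1) by (simp add: prod.remove)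
qed

lemma ln_abs_bound:
  fixes y a :: "'a::euclidean_space"
  assumes "norm y \<le> R"
  shows "\<bar>ln (norm (y - a))\<bar> \<le> R + norm a + (\<Prod>b\<in>Basis. phi0 ((y - a) \<bullet> b))"
proof -
  define s where "s = norm (y - a)"
  have sR: "s \<le> R + norm a" unfolding s_def using norm_triangle_ineq4[of y a] assms by linarith
  have R0: "0 \<le> R" using assms norm_ge_zero order_trans by blast
  have H0: "0 \<le> (\<Prod>b\<in>Basis. phi0 ((y - a) \<bullet> b))" by (rule H_nonneg)
  consider "s = 0" | "s \<ge> 1" | "0 < s" "s < 1" unfolding s_def by force
  thus ?thesis
  proof cases
    case 1 thus ?thesis using R0 H0 by (simp add: s_def)
  next
    case 2
    have "ln s \<le> s - 1" using 2 by (intro ln_le_minus_one) auto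
    moreover have "0 \<le> ln s" using 2 by simp
    ultimately show ?thesis using sR H0 by (simp add: s_def[symmetric])
  next
    case 3
    have "ln s < 0" using 3 by simp
    moreover have "- ln s \<le> (\<Prod>b\<in>Basis. phi0 ((y - a) \<bullet> b))"
      using neg_ln_le_H[of "y - a"] 3 by (simp add: s_def)
    ultimately show ?thesis using R0 norm_ge_zero[of a] unfolding s_def[symmetric] by linarith
  qed
qed

lemma ln_div_abs_le: "0 \<le> a \<Longrightarrow> 0 \<le> b \<Longrightarrow> \<bar>ln (a / b)\<bar> \<le> \<bar>ln a\<bar> + \<bar>ln (b::real)\<bar>"
  by (cases "a = 0 \<or> b = 0") (auto simp: ln_div)

theorem lemma3p1:
  fixes p :: real and u :: "real^4 \<Rightarrow> real"
  assumes "p > 0"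
    and "Ck 4 u"
    and "\<forall>x. bilaplacian u x = (1 - norm x powr p) * exp (4 * u x)"
    and "integrable lborel (\<lambda>x. (1 - norm x powr p) * exp (4 * u x))"
  shows "\<exists>C. \<forall>x::real^4. norm x \<ge> 4 \<longrightarrow>
           (1 / (8 * pi\<^sup>2)) * (LINT y|lborel. ln (norm y / norm (x - y)) * ((1 - norm y powr p) * exp (4 * u y)))
           \<le> - (LINT y|lborel. (1 - norm y powr p) * exp (4 * u y)) / (8 * pi\<^sup>2) * ln (norm x) + C"
proof -
  define f where "f = (\<lambda>y::real^4. (1 - norm y powr p) * exp (4 * u y))"
  have fi: "integrable lborel f" using assms(4) by (simp add: f_def)
  have fm: "f \<in> borel_measurable borel" using borel_measurable_integrable[OF fi] by simp
  have e: "(4::nat) = Suc 3" by simp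
  have "Ck (Suc 3) u" using assms(2) by (subst (asm) e)
  hence "u differentiable_on UNIV" by (simp only: Ck.simps)
  hence cu: "continuous_on UNIV u" by (rule differentiable_imp_continuous_on)
  have bnd: "\<exists>M\<ge>0. \<forall>y. norm y \<le> R \<longrightarrow> \<bar>f y\<bar> \<le> M" for R
  proof -
    have "compact (u ` cball 0 R)"
      by (rule compact_continuous_image) (use cu continuous_on_subset in auto)
    then obtain B where B: "\<And>y. y \<in> cball 0 R \<Longrightarrow> \<bar>u y\<bar> \<le> B"
      by (metis bounded_iff compact_imp_bounded image_eqI real_norm_def)
    show ?thesis
    proof (intro exI[of _ "(1 + \<bar>R\<bar> powr p) * exp (4 * B)"] conjI allI impI)
      show "0 \<le> (1 + \<bar>R\<bar> powr p) * exp (4 * B)" by simp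
      fix y :: "real^4" assume y: "norm y \<le> R"
      have "norm y powr p \<le> \<bar>R\<bar> powr p" using y assms(1) by (intro powr_mono2) auto
      moreover have "0 \<le> norm y powr p" by simp
      ultimately have "\<bar>1 - norm y powr p\<bar> \<le> 1 + \<bar>R\<bar> powr p" by linarith
      moreover have "exp (4 * u y) \<le> exp (4 * B)" using B[of y] y by simp
      ultimately show "\<bar>f y\<bar> \<le> (1 + \<bar>R\<bar> powr p) * exp (4 * B)"
        unfolding f_def abs_mult by (intro mult_mono) auto
    qed
  qed
  have gint: "integrable lborel (\<lambda>y. ln (norm y / norm (x - y)) * f y)" for x :: "real^4"
  proof -
    define R where "R = 2 * norm x + 1"
    obtain M where M0: "M \<ge> 0" and M: "\<And>y. norm y \<le> R \<Longrightarrow> \<bar>f y\<bar> \<le> M" using bnd[of R] by blast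
    define H where "H = (\<lambda>a (y::real^4). \<Prod>b\<in>Basis. phi0 ((y - a) \<bullet> b))"
    have Hn: "0 \<le> H a y" for a y unfolding H_def by (rule H_nonneg)
    have Hi: "integrable lborel (H a)" for a unfolding H_def by (rule integrable_H)
    have ci: "integrable lborel (indicator (cball (0::real^4) R) :: real^4 \<Rightarrow> real)"
      using emeasure_lborel_cball_finite[of "0::real^4" R] by (intro integrable_real_indicator) auto
    have "integrable lborel (\<lambda>y. ln 2 * \<bar>f y\<bar> + M * (indicator (cball 0 R) y * (2 * R + norm x) + (H 0 y + H x y)))"
      using fi ci Hi by (intro Bochner_Integration.integrable_add Bochner_Integration.integrable_mult_right
          Bochner_Integration.integrable_mult_left integrable_abs) auto
    then show ?thesis
    proof (rule Bochner_Integration.integrable_bound[OF _ _ AE_I2])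
      show "(\<lambda>y. ln (norm y / norm (x - y)) * f y) \<in> borel_measurable lborel"
        using fm by measurable
    next
      fix y :: "real^4"
      have D0: "0 \<le> M * (indicator (cball 0 R) y * (2 * R + norm x) + (H 0 y + H x y))"
        using M0 Hn[of 0 y] Hn[of x y] R_def by (intro mult_nonneg_nonneg add_nonneg_nonneg) auto
      have "\<bar>ln (norm y / norm (x - y)) * f y\<bar> \<le> ln 2 * \<bar>f y\<bar> + M * (indicator (cball 0 R) y * (2 * R + norm x) + (H 0 y + H x y))"
      proof (cases "norm y \<le> R")
        case True
        have "\<bar>ln (norm y / norm (x - y))\<bar> \<le> \<bar>ln (norm (y - 0))\<bar> + \<bar>ln (norm (y - x))\<bar>"
          using ln_div_abs_le[of "norm y" "norm (x - y)"] by (simp add: norm_minus_commute)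
        also have "\<dots> \<le> (R + norm (0::real^4) + H 0 y) + (R + norm x + H x y)"
          unfolding H_def by (intro add_mono ln_abs_bound True)
        finally have L: "\<bar>ln (norm y / norm (x - y))\<bar> \<le> 2 * R + norm x + (H 0 y + H x y)" by simp
        have "\<bar>ln (norm y / norm (x - y)) * f y\<bar> \<le> (2 * R + norm x + (H 0 y + H x y)) * M"
          unfolding abs_mult using Hn[of 0 y] Hn[of x y] R_def by (intro mult_mono L M True) auto
        moreover have "0 \<le> ln 2 * \<bar>f y\<bar>" by simp
        ultimately show ?thesis using True M0 by (simp add: algebra_simps) (smt (verit) abs_ge_zero ln_ge_zero mult_nonneg_nonneg one_le_numeral)
      next
        case False
        hence y: "norm y > 2 * norm x" unfolding R_def by simp
        have a: "norm y - norm x \<le> norm (x - y)" using norm_triangle_ineq2[of y x] by (simp add: norm_minus_commute)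
        have b: "norm (x - y) \<le> norm x + norm y" by (rule norm_triangle_ineq4)
        have nxy: "0 < norm (x - y)" using a y norm_ge_zero[of x] by linarith
        have ny: "0 < norm y" using y by (smt (verit) norm_ge_zero)
        have "ln (norm y) \<le> ln (2 * norm (x - y))" using a y nxy ny by (subst ln_le_cancel_iff) auto
        moreover have "ln (norm (x - y)) \<le> ln (2 * norm y)" using b y nxy ny by (subst ln_le_cancel_iff) (auto, smt (verit) norm_ge_zero)
        ultimately have "\<bar>ln (norm y / norm (x - y))\<bar> \<le> ln 2"
          using nxy ny by (simp add: ln_div ln_mult)
        hence "\<bar>ln (norm y / norm (x - y)) * f y\<bar> \<le> ln 2 * \<bar>f y\<bar>"
          unfolding abs_mult by (intro mult_right_mono) auto
        thus ?thesis using D0 by linarith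
      qed
      thus "norm (ln (norm y / norm (x - y)) * f y) \<le> norm (ln 2 * \<bar>f y\<bar> + M * (indicator (cball 0 R) y * (2 * R + norm x) + (H 0 y + H x y)))"
        using D0 by simp
    qed
  qed
  have pw: "AE y in lborel. ln (norm y / norm (x - y)) * f y + ln (norm x) * f y \<le> ln 2 * \<bar>f y\<bar>"
    if x: "norm x \<ge> 4" for x :: "real^4"
    using AE_lborel_singleton[of 0]
  proof (rule AE_mp, intro AE_I2 impI)
    fix y :: "real^4" assume y0: "y \<noteq> 0"
    define K where "K = ln (norm y / norm (x - y)) + ln (norm x)"
    have nx: "0 < norm x" using x by linarith
    have ny: "0 < norm y" using y0 by simp
    show "ln (norm y / norm (x - y)) * f y + ln (norm x) * f y \<le> ln 2 * \<bar>f y\<bar>"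
    proof (cases "norm y < 1")
      case True
      have "norm y powr p \<le> 1 powr p" using True assms(1) by (intro powr_mono2) auto
      hence f0: "0 \<le> f y" unfolding f_def by simp
      have nxy: "norm x - 1 \<le> norm (x - y)" using norm_triangle_ineq2[of x y] True by simp
      hence nxy0: "0 < norm (x - y)" using x by linarith
      have "norm y * norm x \<le> 2 * norm (x - y)"
      proof -
        have "norm y * norm x \<le> 1 * norm x" using True by (intro mult_right_mono) auto
        thus ?thesis using nxy x by simp
      qed
      hence "ln (norm y * norm x) \<le> ln (2 * norm (x - y))"
        using nx ny nxy0 by (subst ln_le_cancel_iff) auto
      hence "K \<le> ln 2" unfolding K_def using nx ny nxy0 by (simp add: ln_div ln_mult)
      hence "K * f y \<le> ln 2 * f y" using f0 by (rule mult_right_mono)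
      thus ?thesis using f0 by (simp add: K_def algebra_simps)
    next
      case False
      have "1 powr p \<le> norm y powr p" using False assms(1) by (intro powr_mono2) auto
      hence f0: "f y \<le> 0" unfolding f_def by (simp add: mult_nonpos_nonneg)
      have "- ln 2 \<le> K"
      proof (cases "y = x")
        case True thus ?thesis using x by (simp add: K_def) (smt (verit) ln_ge_zero ln_gt_zero_iff)
      next
        case yx: False
        hence nxy0: "0 < norm (x - y)" by simp
        have "(norm x - 1) * (norm y - 1) \<ge> 0" using x False by simp
        hence "norm (x - y) \<le> 2 * (norm y * norm x)"
          using norm_triangle_ineq4[of x y] x False by (simp add: algebra_simps)
        hence "ln (norm (x - y)) \<le> ln (2 * (norm y * norm x))"
          using nxy0 nx ny by (subst ln_le_cancel_iff) auto
        thus ?thesis unfolding K_def using nx ny nxy0 by (simp add: ln_div ln_mult)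
      qed
      hence "K * f y \<le> (- ln 2) * f y" using f0 by (rule mult_right_mono_neg)
      thus ?thesis using f0 by (simp add: K_def algebra_simps)
    qed
  qed
  have main: "(LINT y|lborel. ln (norm y / norm (x - y)) * f y) + ln (norm x) * (LINT y|lborel. f y)
     \<le> ln 2 * (LINT y|lborel. \<bar>f y\<bar>)" if x: "norm x \<ge> 4" for x :: "real^4"
  proof -
    have "(LINT y|lborel. ln (norm y / norm (x - y)) * f y) + ln (norm x) * (LINT y|lborel. f y)
        = (LINT y|lborel. ln (norm y / norm (x - y)) * f y + ln (norm x) * f y)"
      using gint fi by simp
    also have "\<dots> \<le> (LINT y|lborel. ln 2 * \<bar>f y\<bar>)"
      by (rule integral_mono_AE) (use gint fi pw[OF x] in auto)
    also have "\<dots> = ln 2 * (LINT y|lborel. \<bar>f y\<bar>)" by simp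
    finally show ?thesis .
  qed
  show ?thesis
  proof (intro exI[of _ "ln 2 * (LINT y|lborel. \<bar>f y\<bar>) / (8 * pi\<^sup>2)"] allI impI)
    fix x :: "real^4" assume x: "norm x \<ge> 4"
    have pp: "0 < 8 * pi\<^sup>2" by simp
    from main[OF x] have "(1 / (8 * pi\<^sup>2)) * (LINT y|lborel. ln (norm y / norm (x - y)) * f y)
       \<le> - (LINT y|lborel. f y) / (8 * pi\<^sup>2) * ln (norm x) + ln 2 * (LINT y|lborel. \<bar>f y\<bar>) / (8 * pi\<^sup>2)"
      using pp by (simp add: field_simps)
    thus "(1 / (8 * pi\<^sup>2)) * (LINT y|lborel. ln (norm y / norm (x - y)) * ((1 - norm y powr p) * exp (4 * u y)))
           \<le> - (LINT y|lborel. (1 - norm y powr p) * exp (4 * u y)) / (8 * pi\<^sup>2) * ln (norm x) + ln 2 * (LINT y|lborel. \<bar>f y\<bar>) / (8 * pi\<^sup>2)"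
      by (simp add: f_def)
  qed
qed

end
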